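(* Let $\mathcal Y\subset\mathbb R^d$ be finite with no element a strict convex combination of others, $\kappa>0$, $\gamma_i=(c(y,\xi_i))_{y\in\mathcal Y}$ for $i\in[N]$, and $\Omega_\Delta$ a proper l.s.c. convex function with domain $\Delta^{\mathcal Y}$ whose restriction to the affine hull of $\Delta^{\mathcal Y}$ is Legendre-type. For $q_\otimes=(q_i)_{i\in[N]}\in\Delta_\otimes$ let $\bar{\mathcal S}_{\Omega_\Delta,N}(q_\otimes):=\inf_{s_\otimes\in\bar S_\otimes}\mathcal S_N(s_\otimes,q_\otimes)$. Then $$\bar{\mathcal S}_{\Omega_\Delta,N}(q_\otimes)=\frac1N\sum_{i=1}^N\langle\gamma_i|q_i\rangle+\frac\kappa N\Big[\sum_{i=1}^N\Omega_\Delta(q_i)-N\,\Omega_\Delta\Big(\frac1N\sum_{i=1}^Nq_i\Big)\Big].$$ Moreover, if $\Psi_\Delta$ is a Legendre-type function with $\Omega_\Delta=\Psi_\Delta+\mathbb I_{\Delta^{\mathcal Y}}$, then $\bar{\mathcal S}_{\Omega_\Delta,N}$ coincides on $\Delta_\otimes$ with $$\bar{\mathcal S}_{\Psi_\Delta,N}(q_\otimes):=\frac1N\sum_{i=1}^N\langle\gamma_i|q_i\rangle+\frac\kappa N\Big[\sum_{i=1}^N\Psi_\Delta(q_i)-N\,\Psi_\Delta\Big(\frac1N\sum_{i=1}^Nq_i\Big)\Big],$$ and $\bar{\mathcal S}_{\Psi_\Delta,N}$ is convex if the function $q_\otimes\mapsto\frac1N\sum_i\Psi_\Delta(q_i)-\Psi_\Delta(\frac1N\sum_iq_i)$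 is convex; this latter function is non-negative.
   Context: $\Delta^{\mathcal Y}$ is the probability simplex indexed by $\mathcal Y$, $\Delta_\otimes=(\Delta^{\mathcal Y})^N$, $\bar S_\otimes=\{(s_1,\dots,s_N)\in(\mathbb R^{\mathcal Y})^N:s_1=\dots=s_N\}$, $\mathbb I_A$ is the indicator of $A$. Legendre-type: strictly convex on the interior of the domain and essentially smooth (w.r.t. the affine hull's metric for restrictions). $\mathcal L_{\Omega_\Delta}(s;q)=\Omega_\Delta(q)+\Omega_\Delta^*(s)-\langle s|q\rangle$, and $\mathcal S_N(s_\otimes,q_\otimes)=\frac1N\sum_{i=1}^N\big[\langle\gamma_i|q_i\rangle+\kappa\mathcal L_{\Omega_\Delta}(s_i;q_i)\big]$. *)

theory Defs
  imports "HOL-Analysis.Analysis" "HOL-Library.Extended_Real"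
begin

definition dom_e :: "('a \<Rightarrow> ereal) \<Rightarrow> 'a set" where
  "dom_e f = {x. f x < \<infinity>}"

definition proper_fun :: "('a \<Rightarrow> ereal) \<Rightarrow> bool" where
  "proper_fun f \<longleftrightarrow> (\<forall>x. f x \<noteq> -\<infinity>) \<and> (\<exists>x. f x < \<infinity>)"

definition ext_convex_on :: "'a::real_vector set \<Rightarrow> ('a \<Rightarrow> ereal) \<Rightarrow> bool" where
  "ext_convex_on D f \<longleftrightarrow> convex D \<and> (\<forall>x\<in>D. \<forall>y\<in>D. \<forall>t::real. 0 < t \<longrightarrow> t < 1 \<longrightarrow>
      f ((1 - t) *\<^sub>R x + t *\<^sub>R y) \<le> ereal (1 - t) * f x + ereal t * f y)"

definition lsc_fun :: "('a::topological_space \<Rightarrow> ereal) \<Rightarrow> bool" where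
  "lsc_fun f \<longleftrightarrow> (\<forall>x X. X \<longlonglongrightarrow> x \<longrightarrow> f x \<le> liminf (\<lambda>k. f (X k)))"

text \<open>Interior of the domain relative to an affine set A (= relative interior when
  A is the affine hull of the domain, = interior when A = UNIV).\<close>
definition int_rel :: "'a::euclidean_space set \<Rightarrow> ('a \<Rightarrow> ereal) \<Rightarrow> 'a set" where
  "int_rel A f = {x \<in> A. \<exists>e>0. ball x e \<inter> A \<subseteq> dom_e f}"

text \<open>Legendre-type (Rockafellar, Sect. 26) for the restriction of f to the affine set A
  (with dom f contained in A): closed proper convex, essentially smooth and strictly
  convex on the (relative) interior of its domain; derivatives and their norms are
  taken with respect to the metric of A, i.e. in directions of the subspace parallel to A.\<close>
definition legendre_on :: "'a::euclidean_space set \<Rightarrow> ('a \<Rightarrow> ereal) \<Rightarrow> bool" where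
  "legendre_on A f \<longleftrightarrow>
     affine A \<and> dom_e f \<subseteq> A \<and> proper_fun f \<and> lsc_fun f \<and> ext_convex_on UNIV f \<and>
     (let C = int_rel A f; L = {u - w | u w. u \<in> A \<and> w \<in> A};
          g = (\<lambda>x. real_of_ereal (f x)) in
       C \<noteq> {} \<and>
       (\<forall>x\<in>C. g differentiable (at x within A)) \<and>
       (\<forall>X x. (\<forall>k. X k \<in> C) \<longrightarrow> X \<longlonglongrightarrow> x \<longrightarrow> x \<in> closure C - C \<longrightarrow>
           (\<forall>M. \<forall>\<^sub>F k in sequentially. \<forall>D. (g has_derivative D) (at (X k) within A) \<longrightarrow>
               (\<exists>v\<in>L. norm v = 1 \<and> D v > M))) \<and>
       (\<forall>x\<in>C. \<forall>y\<in>C. \<forall>t::real. x \<noteq> y \<longrightarrow> 0 < t \<longrightarrow> t < 1 \<longrightarrow>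
           f ((1 - t) *\<^sub>R x + t *\<^sub>R y) < ereal (1 - t) * f x + ereal t * f y))"

definition ind_fun :: "'a set \<Rightarrow> 'a \<Rightarrow> ereal" where
  "ind_fun A x = (if x \<in> A then 0 else \<infinity>)"

definition conj_fun :: "('a::real_inner \<Rightarrow> ereal) \<Rightarrow> 'a \<Rightarrow> ereal" where
  "conj_fun f s = (SUP q. ereal (s \<bullet> q) - f q)"

definition prob_simplex :: "(real ^ 'y::finite) set" where
  "prob_simplex = {q. (\<forall>y. 0 \<le> q $ y) \<and> (\<Sum>y\<in>UNIV. q $ y) = 1}"

definition FY_loss :: "(real ^ 'y::finite \<Rightarrow> ereal) \<Rightarrow> real ^ 'y \<Rightarrow> real ^ 'y \<Rightarrow> ereal" where
  "FY_loss \<Omega> s q = \<Omega> q + conj_fun \<Omega> s - ereal (s \<bullet> q)"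

text \<open>S_N(s_\<otimes>, q_\<otimes>), with [N] represented by the finite type 'n, N = CARD('n).\<close>
definition S_N :: "(real ^ 'y::finite \<Rightarrow> ereal) \<Rightarrow> real \<Rightarrow> ('n::finite \<Rightarrow> real ^ 'y)
     \<Rightarrow> (real ^ 'y) ^ 'n \<Rightarrow> (real ^ 'y) ^ 'n \<Rightarrow> ereal" where
  "S_N \<Omega> \<kappa> \<gamma> s q = ereal (1 / real CARD('n)) *
     (\<Sum>i\<in>UNIV. ereal (\<gamma> i \<bullet> q $ i) + ereal \<kappa> * FY_loss \<Omega> (s $ i) (q $ i))"

definition consensus :: "((real ^ 'y::finite) ^ 'n::finite) set" where
  "consensus = {s. \<forall>i j. s $ i = s $ j}"

definition Sbar_inf :: "(real ^ 'y::finite \<Rightarrow> ereal) \<Rightarrow> real \<Rightarrow> ('n::finite \<Rightarrow> real ^ 'y)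
     \<Rightarrow> (real ^ 'y) ^ 'n \<Rightarrow> ereal" where
  "Sbar_inf \<Omega> \<kappa> \<gamma> q = (INF s\<in>consensus. S_N \<Omega> \<kappa> \<gamma> s q)"

definition Sbar_formula :: "(real ^ 'y::finite \<Rightarrow> ereal) \<Rightarrow> real \<Rightarrow> ('n::finite \<Rightarrow> real ^ 'y)
     \<Rightarrow> (real ^ 'y) ^ 'n \<Rightarrow> ereal" where
  "Sbar_formula F \<kappa> \<gamma> q =
     ereal (1 / real CARD('n) * (\<Sum>i\<in>UNIV. \<gamma> i \<bullet> q $ i)) +
     ereal (\<kappa> / real CARD('n)) *
       ((\<Sum>i\<in>UNIV. F (q $ i)) -
        ereal (real CARD('n)) * F ((1 / real CARD('n)) *\<^sub>R (\<Sum>i\<in>UNIV. q $ i)))"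

definition jensen_gap :: "(real ^ 'y::finite \<Rightarrow> ereal) \<Rightarrow> (real ^ 'y) ^ 'n::finite \<Rightarrow> ereal" where
  "jensen_gap F q = ereal (1 / real CARD('n)) * (\<Sum>i\<in>UNIV. F (q $ i)) -
     F ((1 / real CARD('n)) *\<^sub>R (\<Sum>i\<in>UNIV. q $ i))"

end

theory Submission imports Defs begin

lemma fin_dom:
  assumes "proper_fun F" "x \<in> dom_e F"
  shows "F x = ereal (real_of_ereal (F x))"
  using assms unfolding proper_fun_def dom_e_def
  by (metis less_ereal.simps(2) mem_Collect_eq real_of_ereal.elims)

lemma convex_dom_real:
  fixes F :: "'a::real_vector \<Rightarrow> ereal"
  assumes cv: "ext_convex_on UNIV F" and pr: "proper_fun F"
  shows "convex (dom_e F)" "convex_on (dom_e F) (\<lambda>x. real_of_ereal (F x))"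
proof -
  have key: "F ((1 - t) *\<^sub>R x + t *\<^sub>R y) \<le> ereal ((1 - t) * real_of_ereal (F x) + t * real_of_ereal (F y))"
    if "x \<in> dom_e F" "y \<in> dom_e F" "0 < t" "t < 1" for x y t
  proof -
    have "F ((1 - t) *\<^sub>R x + t *\<^sub>R y) \<le> ereal (1 - t) * F x + ereal t * F y"
      using cv that unfolding ext_convex_on_def by blast
    also have "\<dots> = ereal ((1 - t) * real_of_ereal (F x) + t * real_of_ereal (F y))"
      using fin_dom[OF pr that(1)] fin_dom[OF pr that(2)]
      by (metis plus_ereal.simps(1) times_ereal.simps(1))
    finally show ?thesis .
  qed
  show cd: "convex (dom_e F)"
    unfolding convex_alt
  proof (intro ballI allI impI)
    fix x y and u :: real assume xy: "x \<in> dom_e F" "y \<in> dom_e F" and u: "0 \<le> u \<and> u \<le> 1"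
    show "(1 - u) *\<^sub>R x + u *\<^sub>R y \<in> dom_e F"
    proof (cases "u = 0 \<or> u = 1")
      case True then show ?thesis using xy by auto
    next
      case False
      then have "F ((1 - u) *\<^sub>R x + u *\<^sub>R y) \<le> ereal ((1 - u) * real_of_ereal (F x) + u * real_of_ereal (F y))"
        using key[OF xy, of u] u by auto
      then have "F ((1 - u) *\<^sub>R x + u *\<^sub>R y) < \<infinity>"
        using le_less_trans by fastforce
      then show ?thesis unfolding dom_e_def by simp
    qed
  qed
  show "convex_on (dom_e F) (\<lambda>x. real_of_ereal (F x))"
  proof (rule convex_onI[OF _ cd])
    fix t x y assume h: "0 < (t::real)" "t < 1" "x \<in> dom_e F" "y \<in> dom_e F"
    have "(1 - t) *\<^sub>R x + t *\<^sub>R y \<in> dom_e F" using cd h unfolding convex_alt by auto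
    then show "real_of_ereal (F ((1 - t) *\<^sub>R x + t *\<^sub>R y)) \<le> (1 - t) * real_of_ereal (F x) + t * real_of_ereal (F y)"
      using key[OF h(3,4) h(1,2)] fin_dom[OF pr] by (metis ereal_less_eq(3))
  qed
qed

lemma subgrad:
  fixes F :: "'a::euclidean_space \<Rightarrow> ereal"
  assumes cv: "ext_convex_on UNIV F" and pr: "proper_fun F" and aff: "affine A"
    and xd: "x \<in> dom_e F" and yd: "y \<in> dom_e F" and xA: "x \<in> A" and yA: "y \<in> A"
    and der: "((\<lambda>z. real_of_ereal (F z)) has_derivative D) (at x within A)"
  shows "real_of_ereal (F x) + D (y - x) \<le> real_of_ereal (F y)"
proof -
  define g where "g = (\<lambda>z. real_of_ereal (F z))"
  define p where "p = (\<lambda>t::real. x + t *\<^sub>R (y - x))"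
  have cvo: "convex_on (dom_e F) g" using convex_dom_real[OF cv pr] g_def by simp
  have pd: "(p has_derivative (\<lambda>t. t *\<^sub>R (y - x))) (at 0)"
    unfolding p_def by (auto intro!: derivative_eq_intros)
  have pA: "p ` UNIV \<subseteq> A"
  proof
    fix z assume "z \<in> p ` UNIV"
    then obtain t where z: "z = p t" by auto
    have "z = (1 - t) *\<^sub>R x + t *\<^sub>R y" unfolding z p_def by (simp add: algebra_simps)
    then show "z \<in> A" using aff xA yA unfolding affine_def by auto
  qed
  have gd: "(g has_derivative D) (at (p 0) within p ` UNIV)"
    using has_derivative_subset[OF der[folded g_def] pA] by (simp add: p_def)
  have bl: "bounded_linear D" using der has_derivative_bounded_linear by blast
  have hd: "((g \<circ> p) has_derivative (\<lambda>t. D (t *\<^sub>R (y - x)))) (at 0)"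
    using diff_chain_within[OF pd gd] by (simp add: o_def)
  have "(\<lambda>t. D (t *\<^sub>R (y - x))) = (*) (D (y - x))"
    using linear_scale[OF bounded_linear.linear[OF bl]] by (auto simp: fun_eq_iff)
  with hd have "((g \<circ> p) has_field_derivative D (y - x)) (at 0)"
    unfolding has_field_derivative_def by simp
  then have lim: "((\<lambda>t. ((g \<circ> p) t - (g \<circ> p) 0) / (t - 0)) \<longlongrightarrow> D (y - x)) (at_right 0)"
    unfolding has_field_derivative_iff by (rule tendsto_within_subset) auto
  have ev: "\<forall>\<^sub>F t in at_right 0. ((g \<circ> p) t - (g \<circ> p) 0) / (t - 0) \<le> g y - g x"
    using eventually_at_right_real[OF zero_less_one]
  proof eventually_elim
    case (elim t)
    then have t: "0 < t" "t < 1" by auto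
    have "p t = (1 - t) *\<^sub>R x + t *\<^sub>R y" unfolding p_def by (simp add: algebra_simps)
    then have "g (p t) \<le> (1 - t) * g x + t * g y"
      using convex_onD[OF cvo, of t x y] t xd yd by auto
    then have "g (p t) - g x \<le> t * (g y - g x)" by (simp add: algebra_simps)
    then show ?case using t by (simp add: p_def divide_simps mult.commute)
  qed
  have "D (y - x) \<le> g y - g x"
    using tendsto_upperbound[OF lim ev] by simp
  then show ?thesis unfolding g_def by simp
qed

lemma convex_simplex: "convex (prob_simplex :: (real ^ 'y::finite) set)"
  unfolding convex_alt
proof (intro ballI allI impI)
  fix x y :: "real ^ 'y" and u :: real
  assume x: "x \<in> prob_simplex" and y: "y \<in> prob_simplex" and u: "0 \<le> u \<and> u \<le> 1"
  have "(\<Sum>i\<in>UNIV. ((1 - u) *\<^sub>R x + u *\<^sub>R y) $ i) = (1 - u) * (\<Sum>i\<in>UNIV. x $ i) + u * (\<Sum>i\<in>UNIV. y $ i)"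
    by (simp add: sum.distrib sum_distrib_left)
  also have "\<dots> = 1" using x y unfolding prob_simplex_def by simp
  finally show "(1 - u) *\<^sub>R x + u *\<^sub>R y \<in> prob_simplex"
    using x y u unfolding prob_simplex_def by (auto intro!: add_nonneg_nonneg mult_nonneg_nonneg)
qed

lemma simplex_norm: "q \<in> prob_simplex \<Longrightarrow> norm (q :: real ^ 'y::finite) \<le> 1"
  using norm_le_l1_cart[of q] unfolding prob_simplex_def by simp

lemma formula_val:
  fixes q :: "(real ^ 'y::finite) ^ 'n::finite" and F :: "real ^ 'y \<Rightarrow> ereal"
  assumes "\<And>i. F (q $ i) = ereal (f i)" "F ((1 / real CARD('n)) *\<^sub>R (\<Sum>i\<in>UNIV. q $ i)) = ereal b"
  shows "Sbar_formula F \<kappa> \<gamma> q = ereal ((1 / real CARD('n)) * (\<Sum>i\<in>UNIV. \<gamma> i \<bullet> q $ i)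
     + \<kappa> / real CARD('n) * (\<Sum>i\<in>UNIV. f i) - \<kappa> * b)"
proof -
  have N: "real CARD('n) > 0" by simp
  have "Sbar_formula F \<kappa> \<gamma> q = ereal ((1 / real CARD('n)) * (\<Sum>i\<in>UNIV. \<gamma> i \<bullet> q $ i)
     + \<kappa> / real CARD('n) * ((\<Sum>i\<in>UNIV. f i) - real CARD('n) * b))"
    unfolding Sbar_formula_def assms sum_ereal by simp
  also have "\<kappa> / real CARD('n) * ((\<Sum>i\<in>UNIV. f i) - real CARD('n) * b)
     = \<kappa> / real CARD('n) * (\<Sum>i\<in>UNIV. f i) - \<kappa> * b"
    using N by (simp add: right_diff_distrib)
  finally show ?thesis by simp
qed

context
  fixes \<Omega> :: "real ^ 'y::finite \<Rightarrow> ereal"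
  assumes pr: "proper_fun \<Omega>" and cv: "ext_convex_on UNIV \<Omega>"
    and dm: "dom_e \<Omega> = prob_simplex"
    and leg: "legendre_on (affine hull prob_simplex) \<Omega>"
    and lsc: "lsc_fun \<Omega>"
begin

abbreviation "om q \<equiv> real_of_ereal (\<Omega> q)"

lemma om_fin: "q \<in> prob_simplex \<Longrightarrow> \<Omega> q = ereal (om q)"
  using fin_dom[OF pr] dm by auto

lemma om_inf: "q \<notin> prob_simplex \<Longrightarrow> \<Omega> q = \<infinity>"
  using dm unfolding dom_e_def by auto

lemma C_props:
  "int_rel (affine hull prob_simplex) \<Omega> \<noteq> {}"
  "int_rel (affine hull prob_simplex) \<Omega> \<subseteq> prob_simplex"
  "\<And>x. x \<in> int_rel (affine hull prob_simplex) \<Omega> \<Longrightarrow> (\<lambda>z. om z) differentiable (at x within affine hull prob_simplex)"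
proof -
  show "int_rel (affine hull prob_simplex) \<Omega> \<noteq> {}"
    using leg unfolding legendre_on_def Let_def by blast
  show "\<And>x. x \<in> int_rel (affine hull prob_simplex) \<Omega> \<Longrightarrow> (\<lambda>z. om z) differentiable (at x within affine hull prob_simplex)"
    using leg unfolding legendre_on_def Let_def by blast
  show "int_rel (affine hull prob_simplex) \<Omega> \<subseteq> prob_simplex"
  proof
    fix x assume "x \<in> int_rel (affine hull prob_simplex) \<Omega>"
    then obtain e where "e > 0" "ball x e \<inter> affine hull prob_simplex \<subseteq> dom_e \<Omega>" "x \<in> affine hull prob_simplex"
      unfolding int_rel_def by auto
    then show "x \<in> prob_simplex" using dm by auto
  qed
qed

lemma subgrad_vec:
  assumes "x \<in> int_rel (affine hull prob_simplex) \<Omega>"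
  shows "\<exists>s. \<forall>y\<in>prob_simplex. om x + s \<bullet> (y - x) \<le> om y"
proof -
  obtain D where der: "((\<lambda>z. om z) has_derivative D) (at x within affine hull prob_simplex)"
    using C_props(3)[OF assms] unfolding differentiable_def by blast
  have lin: "linear D" using der has_derivative_bounded_linear bounded_linear.linear by blast
  define s where "s = (\<Sum>b\<in>Basis. D b *\<^sub>R b)"
  have sD: "s \<bullet> v = D v" for v
  proof -
    have "D v = D v \<bullet> 1" by simp
    also have "\<dots> = (\<Sum>i\<in>Basis. (v \<bullet> i) * (D i \<bullet> 1))" by (rule Linear_Algebra.linear_componentwise[OF lin])
    also have "\<dots> = s \<bullet> v" unfolding s_def by (simp add: inner_sum_left inner_sum_right inner_commute mult.commute)
    finally show ?thesis by simp
  qed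
  have xP: "x \<in> prob_simplex" using C_props(2) assms by auto
  show ?thesis
  proof (intro exI ballI)
    fix y :: "real ^ 'y" assume yP: "y \<in> prob_simplex"
    show "om x + s \<bullet> (y - x) \<le> om y"
      using subgrad[OF cv pr affine_affine_hull[of prob_simplex], where x=x and y=y and D=D] xP yP dm der sD
      by (simp add: hull_inc)
  qed
qed

definition cs :: "real ^ 'y \<Rightarrow> real" where "cs s = real_of_ereal (conj_fun \<Omega> s)"

lemma conj_props:
  shows "conj_fun \<Omega> s = ereal (cs s)"
    and "\<And>q. q \<in> prob_simplex \<Longrightarrow> s \<bullet> q - om q \<le> cs s"
    and "\<And>B. (\<And>q. q \<in> prob_simplex \<Longrightarrow> s \<bullet> q - om q \<le> B) \<Longrightarrow> cs s \<le> B"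
proof -
  obtain x0 where x0: "x0 \<in> int_rel (affine hull prob_simplex) \<Omega>" using C_props(1) by blast
  then have x0P: "x0 \<in> prob_simplex" using C_props(2) by auto
  obtain s0 where s0: "\<And>y. y \<in> prob_simplex \<Longrightarrow> om x0 + s0 \<bullet> (y - x0) \<le> om y"
    using subgrad_vec[OF x0] by blast
  have term_le: "ereal (s \<bullet> q) - \<Omega> q \<le> ereal B"
    if "\<And>q. q \<in> prob_simplex \<Longrightarrow> s \<bullet> q - om q \<le> B" for q B
  proof (cases "q \<in> prob_simplex")
    case True then show ?thesis using that[OF True] by (subst om_fin[OF True]) simp
  next
    case False then show ?thesis using om_inf[OF False] by simp
  qed
  have up: "conj_fun \<Omega> s \<le> ereal B" if "\<And>q. q \<in> prob_simplex \<Longrightarrow> s \<bullet> q - om q \<le> B" for B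
    unfolding conj_fun_def by (rule SUP_least) (rule term_le[OF that])
  have lo: "ereal (s \<bullet> q - om q) \<le> conj_fun \<Omega> s" if "q \<in> prob_simplex" for q
  proof -
    have "ereal (s \<bullet> q - om q) = ereal (s \<bullet> q) - \<Omega> q" by (subst om_fin[OF that]) simp
    also have "\<dots> \<le> conj_fun \<Omega> s" unfolding conj_fun_def by (rule SUP_upper) simp
    finally show ?thesis .
  qed
  define B0 where "B0 = norm (s - s0) + s0 \<bullet> x0 - om x0"
  have "s \<bullet> q - om q \<le> B0" if "q \<in> prob_simplex" for q
  proof -
    have "s \<bullet> q - om q \<le> s \<bullet> q - om x0 - s0 \<bullet> (q - x0)" using s0[OF that] by simp
    also have "\<dots> = (s - s0) \<bullet> q + s0 \<bullet> x0 - om x0" by (simp add: algebra_simps inner_diff_left inner_diff_right)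
    also have "\<dots> \<le> norm (s - s0) * norm q + s0 \<bullet> x0 - om x0"
      using norm_cauchy_schwarz[of "s - s0" q] by simp
    also have "\<dots> \<le> B0" unfolding B0_def
      using simplex_norm[OF that] by (simp add: mult_left_le)
    finally show ?thesis .
  qed
  then have "conj_fun \<Omega> s \<le> ereal B0" by (rule up)
  moreover have "ereal (s \<bullet> x0 - om x0) \<le> conj_fun \<Omega> s" by (rule lo[OF x0P])
  ultimately show cfin: "conj_fun \<Omega> s = ereal (cs s)" unfolding cs_def
    by (cases "conj_fun \<Omega> s") auto
  show "\<And>q. q \<in> prob_simplex \<Longrightarrow> s \<bullet> q - om q \<le> cs s"
    using lo cfin by (metis ereal_less_eq(3))
  show "\<And>B. (\<And>q. q \<in> prob_simplex \<Longrightarrow> s \<bullet> q - om q \<le> B) \<Longrightarrow> cs s \<le> B"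
    using up cfin by (metis ereal_less_eq(3))
qed

lemma seg_in_C:
  assumes x0: "x0 \<in> int_rel (affine hull prob_simplex) \<Omega>" and p: "p \<in> prob_simplex"
    and t: "0 < t" "t \<le> 1"
  shows "(1 - t) *\<^sub>R p + t *\<^sub>R x0 \<in> int_rel (affine hull prob_simplex) \<Omega>"
proof -
  let ?A = "affine hull (prob_simplex :: (real ^ 'y) set)"
  obtain e where e: "e > 0" "ball x0 e \<inter> ?A \<subseteq> prob_simplex" and x0A: "x0 \<in> ?A"
    using x0 dm unfolding int_rel_def by auto
  have pA: "p \<in> ?A" using p by (simp add: hull_inc)
  have aff: "affine ?A" by simp
  let ?z = "(1 - t) *\<^sub>R p + t *\<^sub>R x0"
  have zA: "?z \<in> ?A" using aff pA x0A unfolding affine_def by auto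
  have "ball ?z (t * e) \<inter> ?A \<subseteq> dom_e \<Omega>"
  proof
    fix w assume w: "w \<in> ball ?z (t * e) \<inter> ?A"
    define u where "u = (1 / t) *\<^sub>R w + (- (1 - t) / t) *\<^sub>R p"
    have "1 / t + (- (1 - t) / t) = 1" using t by (simp add: field_simps)
    then have "u \<in> ?A" unfolding u_def using aff w pA unfolding affine_def by blast
    moreover have "dist x0 u < e"
    proof -
      have h1: "(1 / t) *\<^sub>R ?z = ((1 - t) / t) *\<^sub>R p + x0" using t by (simp add: scaleR_add_right)
      have h2: "(- (1 - t) / t) *\<^sub>R p = - (((1 - t) / t) *\<^sub>R p)" using scaleR_minus_left[of "(1 - t) / t" p] by (simp only: minus_divide_left)
      have "x0 - u = (1 / t) *\<^sub>R ?z - (1 / t) *\<^sub>R w" unfolding u_def h1 h2 by simp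
      then have "x0 - u = (1 / t) *\<^sub>R (?z - w)" by (simp add: scaleR_diff_right)
      then have "dist x0 u = (1 / t) * dist ?z w" using t by (simp add: dist_norm)
      also have "\<dots> < (1 / t) * (t * e)" using w t by (intro mult_strict_left_mono) auto
      also have "\<dots> = e" using t by simp
      finally show ?thesis .
    qed
    ultimately have uP: "u \<in> prob_simplex" using e by auto
    have ta: "t * (- (1 - t) / t) = - (1 - t)" "t * (1 / t) = 1" using t by simp_all
    have "t *\<^sub>R u = w - (1 - t) *\<^sub>R p" unfolding u_def scaleR_add_right scaleR_scaleR ta by (simp add: scaleR_minus_left[symmetric] del: scaleR_minus_left)
    then have "w = (1 - t) *\<^sub>R p + t *\<^sub>R u" by simp
    then have "w \<in> prob_simplex" using convex_simplex p uP t unfolding convex_alt by auto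
    then show "w \<in> dom_e \<Omega>" using dm by simp
  qed
  then show ?thesis unfolding int_rel_def using zA e t by (auto intro!: exI[of _ "t * e"])
qed

lemma key_approx:
  assumes p: "p \<in> prob_simplex" and eps: "\<epsilon> > 0"
  shows "\<exists>s. cs s - s \<bullet> p < - om p + \<epsilon>"
proof (rule ccontr)
  assume "\<not> ?thesis"
  then have H: "\<And>s. - om p + \<epsilon> \<le> cs s - s \<bullet> p" by (meson not_le)
  obtain x0 where x0: "x0 \<in> int_rel (affine hull prob_simplex) \<Omega>" using C_props(1) by blast
  then have x0P: "x0 \<in> prob_simplex" using C_props(2) by auto
  define X where "X = (\<lambda>t. (1 - t) *\<^sub>R p + t *\<^sub>R x0)"
  have bound: "om (X t) \<le> t * om x0 + (1 - t) * (om p - \<epsilon>)" if t: "0 < t" "t < 1" for t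
  proof -
    have XC: "X t \<in> int_rel (affine hull prob_simplex) \<Omega>" unfolding X_def using seg_in_C[OF x0 p] t by simp
    then obtain st where st: "\<And>y. y \<in> prob_simplex \<Longrightarrow> om (X t) + st \<bullet> (y - X t) \<le> om y"
      using subgrad_vec by blast
    have XP: "X t \<in> prob_simplex" using XC C_props(2) by auto
    have "cs st \<le> st \<bullet> X t - om (X t)"
      by (rule conj_props(3)) (frule st, simp add: inner_diff_right)
    with H[of st] have i1: "- om p + \<epsilon> \<le> st \<bullet> (X t - p) - om (X t)" by (simp add: inner_diff_right)
    have i2: "om (X t) + st \<bullet> (x0 - X t) \<le> om x0" using st[OF x0P] .
    define a where "a = st \<bullet> (x0 - p)"
    have e1: "st \<bullet> (X t - p) = t * a" unfolding a_def X_def by (simp add: algebra_simps inner_diff_right)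
    have e2: "st \<bullet> (x0 - X t) = (1 - t) * a" unfolding a_def X_def by (simp add: algebra_simps inner_diff_right)
    have j1: "(1 - t) * (- om p + \<epsilon>) \<le> (1 - t) * (t * a - om (X t))"
      using i1 e1 t by (intro mult_left_mono) auto
    have j2: "t * ((1 - t) * a) \<le> t * (om x0 - om (X t))"
      using i2 e2 t by (intro mult_left_mono) auto
    show ?thesis using j1 j2 by (simp add: algebra_simps)
  qed
  define M where "M = \<bar>om x0 - om p + \<epsilon>\<bar> + 1"
  have M: "M > 0" unfolding M_def by simp
  define \<delta> where "\<delta> = min (1/2) (\<epsilon> / (2 * M))"
  have \<delta>: "\<delta> > 0" "\<delta> \<le> 1/2" "\<delta> * M \<le> \<epsilon> / 2" unfolding \<delta>_def using M eps
    by (auto simp: min_def field_simps)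
  define tk where "tk = (\<lambda>k::nat. \<delta> * inverse (real (Suc k)))"
  have tk: "0 < tk k" "tk k \<le> \<delta>" for k
    unfolding tk_def using \<delta> by (auto simp: field_simps)
  have tk0: "tk \<longlonglongrightarrow> 0" unfolding tk_def
    using tendsto_mult[OF tendsto_const[of \<delta>] LIMSEQ_inverse_real_of_nat] by simp
  have Xlim: "(\<lambda>k. X (tk k)) \<longlonglongrightarrow> p"
  proof -
    have "(\<lambda>k. p + tk k *\<^sub>R (x0 - p)) \<longlonglongrightarrow> p + 0 *\<^sub>R (x0 - p)"
      by (intro tendsto_intros tk0)
    moreover have "X (tk k) = p + tk k *\<^sub>R (x0 - p)" for k unfolding X_def by (simp add: algebra_simps)
    ultimately show ?thesis by simp
  qed
  have bk: "\<Omega> (X (tk k)) \<le> ereal (om p - \<epsilon> / 2)" for k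
  proof -
    have t1: "tk k < 1" using tk[of k] \<delta> by simp
    have XP: "X (tk k) \<in> prob_simplex"
      using seg_in_C[OF x0 p, of "tk k"] tk[of k] t1 C_props(2) unfolding X_def by auto
    have "om (X (tk k)) \<le> tk k * om x0 + (1 - tk k) * (om p - \<epsilon>)" using bound tk[of k] t1 by simp
    also have "\<dots> = om p - \<epsilon> + tk k * (om x0 - om p + \<epsilon>)" by (simp add: algebra_simps)
    also have "\<dots> \<le> om p - \<epsilon> + tk k * M" unfolding M_def using tk[of k]
      by (intro add_left_mono mult_left_mono) auto
    also have "\<dots> \<le> om p - \<epsilon> + \<delta> * M" using tk[of k] M by (intro add_left_mono mult_right_mono) auto
    also have "\<dots> \<le> om p - \<epsilon> / 2" using \<delta> by simp
    finally show ?thesis by (subst om_fin[OF XP]) simp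
  qed
  have "\<Omega> p \<le> liminf (\<lambda>k. \<Omega> (X (tk k)))" using lsc Xlim unfolding lsc_fun_def by blast
  also have "\<dots> \<le> limsup (\<lambda>k. \<Omega> (X (tk k)))" by (rule Liminf_le_Limsup) simp
  also have "\<dots> \<le> ereal (om p - \<epsilon> / 2)" by (rule Limsup_bounded) (use bk in auto)
  finally have "\<Omega> p \<le> ereal (om p - \<epsilon> / 2)" .
  then have "ereal (om p) \<le> ereal (om p - \<epsilon> / 2)" using om_fin[OF p] by metis
  then show False using eps by simp
qed

lemma FY_val:
  assumes "q \<in> prob_simplex"
  shows "FY_loss \<Omega> s q = ereal (om q + cs s - s \<bullet> q)"
proof -
  have "FY_loss \<Omega> s q = ereal (om q) + ereal (cs s) - ereal (s \<bullet> q)"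
    unfolding FY_loss_def conj_props(1) by (subst om_fin[OF assms]) (rule refl)
  then show ?thesis by simp
qed

lemma qbar_in:
  fixes q :: "(real ^ 'y) ^ 'n::finite"
  assumes "\<forall>i. q $ i \<in> prob_simplex"
  shows "(1 / real CARD('n)) *\<^sub>R (\<Sum>i\<in>UNIV. q $ i) \<in> prob_simplex"
proof -
  have "(\<Sum>i\<in>UNIV. (1 / real CARD('n)) *\<^sub>R q $ i) \<in> prob_simplex"
    by (rule convex_sum[OF _ convex_simplex]) (use assms in auto)
  then show ?thesis by (simp add: scaleR_sum_right)
qed

lemma SN_val:
  fixes q s :: "(real ^ 'y) ^ 'n::finite" and \<gamma> :: "'n \<Rightarrow> real ^ 'y"
  assumes q: "\<forall>i. q $ i \<in> prob_simplex" and s: "s \<in> consensus"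
  shows "S_N \<Omega> \<kappa> \<gamma> s q = ereal ((1 / real CARD('n)) * (\<Sum>i\<in>UNIV. \<gamma> i \<bullet> q $ i)
     + \<kappa> / real CARD('n) * (\<Sum>i\<in>UNIV. om (q $ i))
     + \<kappa> * (cs (s $ k) - (s $ k) \<bullet> ((1 / real CARD('n)) *\<^sub>R (\<Sum>i\<in>UNIV. q $ i))))"
proof -
  let ?N = "real CARD('n)"
  let ?s = "s $ k"
  have sk: "s $ i = ?s" for i using s unfolding consensus_def by auto
  have "S_N \<Omega> \<kappa> \<gamma> s q = ereal (1 / ?N) *
     ereal (\<Sum>i\<in>UNIV. \<gamma> i \<bullet> q $ i + \<kappa> * (om (q $ i) + cs ?s - ?s \<bullet> q $ i))"
  proof -
    have "(\<Sum>i\<in>UNIV. ereal (\<gamma> i \<bullet> q $ i) + ereal \<kappa> * FY_loss \<Omega> (s $ i) (q $ i))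
        = (\<Sum>i\<in>UNIV. ereal (\<gamma> i \<bullet> q $ i + \<kappa> * (om (q $ i) + cs ?s - ?s \<bullet> q $ i)))"
    proof (rule sum.cong)
      fix i :: 'n
      obtain s0 where s0: "\<And>j. s $ j = s0" using sk by blast
      show "ereal (\<gamma> i \<bullet> q $ i) + ereal \<kappa> * FY_loss \<Omega> (s $ i) (q $ i)
         = ereal (\<gamma> i \<bullet> q $ i + \<kappa> * (om (q $ i) + cs ?s - ?s \<bullet> q $ i))"
        unfolding s0 FY_val[OF q[rule_format]] by simp
    qed simp
    then show ?thesis unfolding S_N_def by simp
  qed
  also have "\<dots> = ereal ((1 / ?N) * (\<Sum>i\<in>UNIV. \<gamma> i \<bullet> q $ i + \<kappa> * (om (q $ i) + cs ?s - ?s \<bullet> q $ i)))"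
    by simp
  also have "(1 / ?N) * (\<Sum>i\<in>UNIV. \<gamma> i \<bullet> q $ i + \<kappa> * (om (q $ i) + cs ?s - ?s \<bullet> q $ i))
     = (1 / ?N) * (\<Sum>i\<in>UNIV. \<gamma> i \<bullet> q $ i) + \<kappa> / ?N * (\<Sum>i\<in>UNIV. om (q $ i))
       + \<kappa> * (cs ?s - ?s \<bullet> ((1 / ?N) *\<^sub>R (\<Sum>i\<in>UNIV. q $ i)))"
  proof -
    have "(\<Sum>i\<in>UNIV. \<gamma> i \<bullet> q $ i + \<kappa> * (om (q $ i) + cs ?s - ?s \<bullet> q $ i))
        = (\<Sum>i\<in>UNIV. (\<gamma> i \<bullet> q $ i + \<kappa> * om (q $ i) + \<kappa> * cs ?s) - \<kappa> * (?s \<bullet> q $ i))"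
      by (rule sum.cong) (simp_all add: algebra_simps)
    also have "\<dots> = (\<Sum>i\<in>UNIV. \<gamma> i \<bullet> q $ i) + \<kappa> * (\<Sum>i\<in>UNIV. om (q $ i)) + ?N * (\<kappa> * cs ?s)
         - \<kappa> * (\<Sum>i\<in>UNIV. ?s \<bullet> q $ i)"
      by (simp only: sum_subtractf sum.distrib sum_distrib_left[symmetric] sum_constant) (simp add: algebra_simps)
    also have "(\<Sum>i\<in>UNIV. ?s \<bullet> q $ i) = ?s \<bullet> (\<Sum>i\<in>UNIV. q $ i)" by (simp add: inner_sum_right)
    finally have A: "(\<Sum>i\<in>UNIV. \<gamma> i \<bullet> q $ i + \<kappa> * (om (q $ i) + cs ?s - ?s \<bullet> q $ i))
       = (\<Sum>i\<in>UNIV. \<gamma> i \<bullet> q $ i) + \<kappa> * (\<Sum>i\<in>UNIV. om (q $ i)) + ?N * (\<kappa> * cs ?s)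
         - \<kappa> * (?s \<bullet> (\<Sum>i\<in>UNIV. q $ i))" .
    have "?N > 0" by simp
    then show ?thesis unfolding A inner_scaleR_right by (simp add: field_simps)
  qed
  finally show ?thesis .
qed

lemma M1:
  fixes q :: "(real ^ 'y) ^ 'n::finite" and \<gamma> :: "'n \<Rightarrow> real ^ 'y"
  assumes q: "\<forall>i. q $ i \<in> prob_simplex" and \<kappa>: "\<kappa> > 0"
  shows "Sbar_inf \<Omega> \<kappa> \<gamma> q = Sbar_formula \<Omega> \<kappa> \<gamma> q"
proof -
  define qb where "qb = (1 / real CARD('n)) *\<^sub>R (\<Sum>i\<in>UNIV. q $ i)"
  have qbP: "qb \<in> prob_simplex" unfolding qb_def by (rule qbar_in[OF q])
  define V where "V = (1 / real CARD('n)) * (\<Sum>i\<in>UNIV. \<gamma> i \<bullet> q $ i)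
     + \<kappa> / real CARD('n) * (\<Sum>i\<in>UNIV. om (q $ i))"
  have F: "Sbar_formula \<Omega> \<kappa> \<gamma> q = ereal (V - \<kappa> * om qb)"
    using formula_val[of \<Omega> q "\<lambda>i. om (q $ i)" _ \<kappa> \<gamma>, OF om_fin[OF q[rule_format]] om_fin[OF qbP[unfolded qb_def]]]
    unfolding V_def qb_def by simp
  have S: "S_N \<Omega> \<kappa> \<gamma> s q = ereal (V + \<kappa> * (cs (s $ undefined) - (s $ undefined) \<bullet> qb))"
    if "s \<in> consensus" for s
    using SN_val[OF q that, of \<kappa> \<gamma> undefined] unfolding V_def qb_def by simp
  show ?thesis
  proof (rule antisym)
    show "Sbar_formula \<Omega> \<kappa> \<gamma> q \<le> Sbar_inf \<Omega> \<kappa> \<gamma> q"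
      unfolding Sbar_inf_def F
    proof (rule INF_greatest)
      fix s :: "(real ^ 'y) ^ 'n" assume s: "s \<in> consensus"
      have "(s $ undefined) \<bullet> qb - om qb \<le> cs (s $ undefined)" by (rule conj_props(2)[OF qbP])
      then have "\<kappa> * (- om qb) \<le> \<kappa> * (cs (s $ undefined) - (s $ undefined) \<bullet> qb)"
        using \<kappa> by (intro mult_left_mono) auto
      then show "ereal (V - \<kappa> * om qb) \<le> S_N \<Omega> \<kappa> \<gamma> s q" unfolding S[OF s] by simp
    qed
  next
    show "Sbar_inf \<Omega> \<kappa> \<gamma> q \<le> Sbar_formula \<Omega> \<kappa> \<gamma> q"
    proof (rule ereal_le_epsilon2)
      fix e :: real assume e: "0 < e"
      obtain s0 where s0: "cs s0 - s0 \<bullet> qb < - om qb + e / \<kappa>"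
        using key_approx[OF qbP, of "e / \<kappa>"] e \<kappa> by auto
      define sv :: "(real ^ 'y) ^ 'n" where "sv = (\<chi> i. s0)"
      have svu: "sv $ undefined = s0" unfolding sv_def by simp
      have sv: "sv \<in> consensus" unfolding sv_def consensus_def by simp
      have "\<kappa> * (cs s0 - s0 \<bullet> qb) \<le> \<kappa> * (- om qb + e / \<kappa>)"
        using s0 \<kappa> by (intro mult_left_mono) auto
      also have "\<dots> = - \<kappa> * om qb + e" using \<kappa> by (simp add: algebra_simps)
      finally have le: "\<kappa> * (cs s0 - s0 \<bullet> qb) \<le> - \<kappa> * om qb + e" .
      have "Sbar_inf \<Omega> \<kappa> \<gamma> q \<le> S_N \<Omega> \<kappa> \<gamma> sv q" unfolding Sbar_inf_def by (rule INF_lower[OF sv])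
      also have "\<dots> = ereal (V + \<kappa> * (cs s0 - s0 \<bullet> qb))" using S[OF sv] svu by simp
      also have "\<dots> \<le> Sbar_formula \<Omega> \<kappa> \<gamma> q + ereal e" unfolding F using le by simp
      finally show "Sbar_inf \<Omega> \<kappa> \<gamma> q \<le> Sbar_formula \<Omega> \<kappa> \<gamma> q + ereal e" .
    qed
  qed
qed

end

lemma jensen_fin:
  fixes \<Psi> :: "real ^ 'y::finite \<Rightarrow> ereal" and q :: "(real ^ 'y) ^ 'n::finite"
  assumes cv: "ext_convex_on UNIV \<Psi>" and pr: "proper_fun \<Psi>" and q: "\<forall>i. q $ i \<in> dom_e \<Psi>"
  shows "(1 / real CARD('n)) *\<^sub>R (\<Sum>i\<in>UNIV. q $ i) \<in> dom_e \<Psi>"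
    and "real_of_ereal (\<Psi> ((1 / real CARD('n)) *\<^sub>R (\<Sum>i\<in>UNIV. q $ i)))
          \<le> (1 / real CARD('n)) * (\<Sum>i\<in>UNIV. real_of_ereal (\<Psi> (q $ i)))"
proof -
  have e: "(1 / real CARD('n)) *\<^sub>R (\<Sum>i\<in>UNIV. q $ i) = (\<Sum>i\<in>UNIV. (1 / real CARD('n)) *\<^sub>R q $ i)"
    by (simp add: scaleR_sum_right)
  show "(1 / real CARD('n)) *\<^sub>R (\<Sum>i\<in>UNIV. q $ i) \<in> dom_e \<Psi>"
    unfolding e by (rule convex_sum[OF _ convex_dom_real(1)[OF cv pr]]) (use q in auto)
  have "real_of_ereal (\<Psi> (\<Sum>i\<in>UNIV. (1 / real CARD('n)) *\<^sub>R q $ i))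
      \<le> (\<Sum>i\<in>UNIV. (1 / real CARD('n)) * real_of_ereal (\<Psi> (q $ i)))"
    by (rule convex_on_sum[OF _ _ convex_dom_real(2)[OF cv pr]]) (use q in auto)
  then show "real_of_ereal (\<Psi> ((1 / real CARD('n)) *\<^sub>R (\<Sum>i\<in>UNIV. q $ i)))
          \<le> (1 / real CARD('n)) * (\<Sum>i\<in>UNIV. real_of_ereal (\<Psi> (q $ i)))"
    unfolding e by (simp add: sum_distrib_left)
qed

lemma gap_val:
  fixes \<Psi> :: "real ^ 'y::finite \<Rightarrow> ereal" and q :: "(real ^ 'y) ^ 'n::finite"
  assumes cv: "ext_convex_on UNIV \<Psi>" and pr: "proper_fun \<Psi>" and q: "\<forall>i. q $ i \<in> dom_e \<Psi>"
  shows "jensen_gap \<Psi> q = ereal ((1 / real CARD('n)) * (\<Sum>i\<in>UNIV. real_of_ereal (\<Psi> (q $ i)))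
            - real_of_ereal (\<Psi> ((1 / real CARD('n)) *\<^sub>R (\<Sum>i\<in>UNIV. q $ i))))"
proof -
  have a: "(\<Sum>i\<in>UNIV. \<Psi> (q $ i)) = (\<Sum>i\<in>UNIV. ereal (real_of_ereal (\<Psi> (q $ i))))"
    by (rule sum.cong) (use fin_dom[OF pr] q in auto)
  show ?thesis unfolding jensen_gap_def a sum_ereal
    by (subst fin_dom[OF pr jensen_fin(1)[OF cv pr q]]) simp
qed

lemma formula_val2:
  fixes \<Psi> :: "real ^ 'y::finite \<Rightarrow> ereal" and q :: "(real ^ 'y) ^ 'n::finite"
  assumes cv: "ext_convex_on UNIV \<Psi>" and pr: "proper_fun \<Psi>" and q: "\<forall>i. q $ i \<in> dom_e \<Psi>"
  shows "Sbar_formula \<Psi> \<kappa> \<gamma> q = ereal ((1 / real CARD('n)) * (\<Sum>i\<in>UNIV. \<gamma> i \<bullet> q $ i)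
     + \<kappa> * ((1 / real CARD('n)) * (\<Sum>i\<in>UNIV. real_of_ereal (\<Psi> (q $ i)))
            - real_of_ereal (\<Psi> ((1 / real CARD('n)) *\<^sub>R (\<Sum>i\<in>UNIV. q $ i)))))"
  by (subst formula_val[where F=\<Psi> and q=q and f="\<lambda>i. real_of_ereal (\<Psi> (q $ i))", OF fin_dom[OF pr] fin_dom[OF pr jensen_fin(1)[OF cv pr q]]])
     (use q in \<open>auto simp: algebra_simps\<close>)

lemma conv_formula:
  fixes \<Psi> :: "real ^ 'y::finite \<Rightarrow> ereal" and \<gamma> :: "'n::finite \<Rightarrow> real ^ 'y"
  assumes cv: "ext_convex_on UNIV \<Psi>" and pr: "proper_fun \<Psi>" and \<kappa>: "\<kappa> > 0"
    and H: "ext_convex_on {q. \<forall>i. q $ i \<in> dom_e \<Psi>} (jensen_gap \<Psi> :: (real ^ 'y) ^ 'n \<Rightarrow> ereal)"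
  shows "ext_convex_on {q. \<forall>i. q $ i \<in> dom_e \<Psi>} (Sbar_formula \<Psi> \<kappa> \<gamma>)"
proof -
  let ?D = "{q :: (real ^ 'y) ^ 'n. \<forall>i. q $ i \<in> dom_e \<Psi>}"
  define L where "L = (\<lambda>q :: (real ^ 'y) ^ 'n. (1 / real CARD('n)) * (\<Sum>i\<in>UNIV. \<gamma> i \<bullet> q $ i))"
  define J where "J = (\<lambda>q :: (real ^ 'y) ^ 'n. (1 / real CARD('n)) * (\<Sum>i\<in>UNIV. real_of_ereal (\<Psi> (q $ i)))
            - real_of_ereal (\<Psi> ((1 / real CARD('n)) *\<^sub>R (\<Sum>i\<in>UNIV. q $ i))))"
  have cD: "convex ?D" using H unfolding ext_convex_on_def by blast
  have SF: "Sbar_formula \<Psi> \<kappa> \<gamma> q = ereal (L q + \<kappa> * J q)" if "q \<in> ?D" for q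
    using formula_val2[OF cv pr, of q] that unfolding L_def J_def by simp
  have JG: "jensen_gap \<Psi> q = ereal (J q)" if "q \<in> ?D" for q
    using gap_val[OF cv pr, of q] that unfolding J_def by simp
  show ?thesis unfolding ext_convex_on_def
  proof (intro conjI cD ballI allI impI)
    fix x y :: "(real ^ 'y) ^ 'n" and t :: real
    assume x: "x \<in> ?D" and y: "y \<in> ?D" and t: "0 < t" "t < 1"
    have z: "(1 - t) *\<^sub>R x + t *\<^sub>R y \<in> ?D" using cD x y t unfolding convex_alt by auto
    have "jensen_gap \<Psi> ((1 - t) *\<^sub>R x + t *\<^sub>R y) \<le> ereal (1 - t) * jensen_gap \<Psi> x + ereal t * jensen_gap \<Psi> y"
      using H x y t unfolding ext_convex_on_def by blast
    then have j: "J ((1 - t) *\<^sub>R x + t *\<^sub>R y) \<le> (1 - t) * J x + t * J y"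
      unfolding JG[OF z] JG[OF x] JG[OF y] by simp
    have l: "L ((1 - t) *\<^sub>R x + t *\<^sub>R y) = (1 - t) * L x + t * L y"
    proof -
      have eqL: "(\<Sum>i\<in>UNIV. \<gamma> i \<bullet> ((1 - t) *\<^sub>R x + t *\<^sub>R y) $ i)
          = (1 - t) * (\<Sum>i\<in>UNIV. \<gamma> i \<bullet> x $ i) + t * (\<Sum>i\<in>UNIV. \<gamma> i \<bullet> y $ i)"
        by (simp add: inner_add_right sum.distrib sum_distrib_left)
      show ?thesis unfolding L_def eqL by (simp add: field_simps)
    qed
    have "L ((1 - t) *\<^sub>R x + t *\<^sub>R y) + \<kappa> * J ((1 - t) *\<^sub>R x + t *\<^sub>R y)
        \<le> (1 - t) * (L x + \<kappa> * J x) + t * (L y + \<kappa> * J y)"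
      using mult_left_mono[OF j, of \<kappa>] \<kappa> l by (simp add: algebra_simps)
    then show "Sbar_formula \<Psi> \<kappa> \<gamma> ((1 - t) *\<^sub>R x + t *\<^sub>R y)
        \<le> ereal (1 - t) * Sbar_formula \<Psi> \<kappa> \<gamma> x + ereal t * Sbar_formula \<Psi> \<kappa> \<gamma> y"
      unfolding SF[OF z] SF[OF x] SF[OF y] by simp
  qed
qed

theorem lemma1:
  fixes ypt :: "'y::finite \<Rightarrow> real ^ 'd"
    and c :: "real ^ 'd \<Rightarrow> 'x \<Rightarrow> real"
    and \<xi> :: "'n::finite \<Rightarrow> 'x"
    and \<kappa> :: real
    and \<Omega> :: "real ^ 'y \<Rightarrow> ereal"
  assumes Y_inj: "inj ypt"
    and Y_extreme: "\<forall>y. ypt y \<notin> convex hull (ypt ` (UNIV - {y}))"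
    and kappa_pos: "\<kappa> > 0"
    and \<Omega>_proper: "proper_fun \<Omega>"
    and \<Omega>_lsc: "lsc_fun \<Omega>"
    and \<Omega>_convex: "ext_convex_on UNIV \<Omega>"
    and \<Omega>_dom: "dom_e \<Omega> = prob_simplex"
    and \<Omega>_legendre: "legendre_on (affine hull prob_simplex) \<Omega>"
  shows
    "(\<forall>q. (\<forall>i. q $ i \<in> prob_simplex) \<longrightarrow>
        Sbar_inf \<Omega> \<kappa> (\<lambda>i. \<chi> y. c (ypt y) (\<xi> i)) q
          = Sbar_formula \<Omega> \<kappa> (\<lambda>i. \<chi> y. c (ypt y) (\<xi> i)) q)
     \<and>
     (\<forall>\<Psi> :: real ^ 'y \<Rightarrow> ereal.
        legendre_on UNIV \<Psi> \<and> (\<forall>x. \<Omega> x = \<Psi> x + ind_fun prob_simplex x) \<longrightarrow>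
          (\<forall>q. (\<forall>i. q $ i \<in> prob_simplex) \<longrightarrow>
              Sbar_inf \<Omega> \<kappa> (\<lambda>i. \<chi> y. c (ypt y) (\<xi> i)) q
                = Sbar_formula \<Psi> \<kappa> (\<lambda>i. \<chi> y. c (ypt y) (\<xi> i)) q)
        \<and> (ext_convex_on {q. \<forall>i. q $ i \<in> dom_e \<Psi>} (jensen_gap \<Psi> :: (real ^ 'y) ^ 'n \<Rightarrow> ereal) \<longrightarrow>
              ext_convex_on {q. \<forall>i. q $ i \<in> dom_e \<Psi>}
                (Sbar_formula \<Psi> \<kappa> (\<lambda>i. \<chi> y. c (ypt y) (\<xi> i))))
        \<and> (\<forall>q :: (real ^ 'y) ^ 'n. (\<forall>i. q $ i \<in> dom_e \<Psi>) \<longrightarrow> jensen_gap \<Psi> q \<ge> 0))"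
proof -
  let ?\<gamma> = "\<lambda>i. \<chi> y. c (ypt y) (\<xi> i)"
  have P1: "Sbar_inf \<Omega> \<kappa> ?\<gamma> q = Sbar_formula \<Omega> \<kappa> ?\<gamma> q" if q: "\<forall>i. q $ i \<in> prob_simplex"
    for q :: "(real ^ 'y) ^ 'n"
    using M1[OF \<Omega>_proper \<Omega>_convex \<Omega>_dom \<Omega>_legendre \<Omega>_lsc q kappa_pos] .
  have P2: "(\<forall>q. (\<forall>i. q $ i \<in> prob_simplex) \<longrightarrow>
              Sbar_inf \<Omega> \<kappa> ?\<gamma> q = Sbar_formula \<Psi> \<kappa> ?\<gamma> q)
        \<and> (ext_convex_on {q. \<forall>i. q $ i \<in> dom_e \<Psi>} (jensen_gap \<Psi> :: (real ^ 'y) ^ 'n \<Rightarrow> ereal) \<longrightarrow>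
              ext_convex_on {q. \<forall>i. q $ i \<in> dom_e \<Psi>} (Sbar_formula \<Psi> \<kappa> ?\<gamma>))
        \<and> (\<forall>q :: (real ^ 'y) ^ 'n. (\<forall>i. q $ i \<in> dom_e \<Psi>) \<longrightarrow> jensen_gap \<Psi> q \<ge> 0)"
    if h: "legendre_on UNIV \<Psi> \<and> (\<forall>x. \<Omega> x = \<Psi> x + ind_fun prob_simplex x)" for \<Psi>
  proof (intro conjI allI impI)
    have prP: "proper_fun \<Psi>" and cvP: "ext_convex_on UNIV \<Psi>" using h unfolding legendre_on_def by auto
    have eq: "\<Omega> x = \<Psi> x" if "x \<in> prob_simplex" for x using h that by (simp add: ind_fun_def)
    fix q :: "(real ^ 'y) ^ 'n" assume q: "\<forall>i. q $ i \<in> prob_simplex"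
    have qb: "(1 / real CARD('n)) *\<^sub>R (\<Sum>i\<in>UNIV. q $ i) \<in> prob_simplex"
      by (rule qbar_in[OF \<Omega>_proper \<Omega>_convex \<Omega>_dom \<Omega>_legendre \<Omega>_lsc q])
    have s: "(\<Sum>i\<in>UNIV. \<Omega> (q $ i)) = (\<Sum>i\<in>UNIV. \<Psi> (q $ i))"
      by (rule sum.cong) (use q eq in auto)
    have "Sbar_formula \<Omega> \<kappa> ?\<gamma> q = Sbar_formula \<Psi> \<kappa> ?\<gamma> q"
      unfolding Sbar_formula_def s eq[OF qb] ..
    then show "Sbar_inf \<Omega> \<kappa> ?\<gamma> q = Sbar_formula \<Psi> \<kappa> ?\<gamma> q" using P1[OF q] by simp
  next
    have prP: "proper_fun \<Psi>" and cvP: "ext_convex_on UNIV \<Psi>" using h unfolding legendre_on_def by auto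
    assume "ext_convex_on {q. \<forall>i. q $ i \<in> dom_e \<Psi>} (jensen_gap \<Psi> :: (real ^ 'y) ^ 'n \<Rightarrow> ereal)"
    then show "ext_convex_on {q. \<forall>i. q $ i \<in> dom_e \<Psi>} (Sbar_formula \<Psi> \<kappa> ?\<gamma>)"
      by (rule conv_formula[OF cvP prP kappa_pos])
  next
    have prP: "proper_fun \<Psi>" and cvP: "ext_convex_on UNIV \<Psi>" using h unfolding legendre_on_def by auto
    fix q :: "(real ^ 'y) ^ 'n" assume q: "\<forall>i. q $ i \<in> dom_e \<Psi>"
    show "jensen_gap \<Psi> q \<ge> 0"
      unfolding gap_val[OF cvP prP q] using jensen_fin(2)[OF cvP prP q] by simp
  qed
  show ?thesis using P1 P2 by blast
qed

end
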